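(* Let $(S_n)_{n\ge0}$ be the random walk with two memory channels with memory parameter $p\in(7/8,1)$. Then $\operatorname{Var}(S_n)\sim n^2$ as $n\to\infty$, i.e. the walk is ballistic.
   Context: A random variable is $\mathrm{Rad}(q)$ if it equals $+1$ with probability $q$ and $-1$ with probability $1-q$. Random walk with two memory channels with parameter $p\in(0,1)$: $S_0=0$; $X_1,X_2$ are i.i.d. $\mathrm{Rad}(1/2)$; for each $n\ge 2$, let $U_{1,n+1},U_{2,n+1}$ be i.i.d. uniform on $\{1,\dots,n\}$ and $\alpha_{1,n+1},\alpha_{2,n+1}$ i.i.d. $\mathrm{Rad}(p)$, all mutually independent and independent of $X_1,\dots,X_n$ (and of all earlier draws); set $T_{n+1}=\alpha_{1,n+1}X_{U_{1,n+1}}+\alpha_{2,n+1}X_{U_{2,n+1}}$ and $X_{n+1}=\max(-1,\min(1,T_{n+1}))\in\{-1,0,1\}$. Then $S_n=X_1+\dots+X_n$. Here $\operatorname{Var}(S_n)\sim n^2$ means $\operatorname{Var}(S_n)$ grows at the order $n^2$ (the ratio $\operatorname{Var}(S_n)/n^2$ stays bounded away from $0$ and $\infty$). *)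

theory Defs
  imports "HOL-Probability.Probability" "HOL-Library.Landau_Symbols"
begin

definition rad :: "real \<Rightarrow> real pmf" where
  "rad q = map_pmf (\<lambda>b. if b then 1 else -1) (bernoulli_pmf q)"

definition clamp :: "real \<Rightarrow> real" where
  "clamp t = max (-1) (min 1 t)"

definition step :: "real \<Rightarrow> real list \<Rightarrow> real list pmf" where
  "step p xs =
     pmf_of_set {1..length xs} \<bind> (\<lambda>u1.
     pmf_of_set {1..length xs} \<bind> (\<lambda>u2.
     rad p \<bind> (\<lambda>a1.
     rad p \<bind> (\<lambda>a2.
     return_pmf (xs @ [clamp (a1 * xs ! (u1 - 1) + a2 * xs ! (u2 - 1))])))))"

fun walk :: "real \<Rightarrow> nat \<Rightarrow> real list pmf" where
  "walk p 0 = return_pmf []"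
| "walk p (Suc n) = walk p n \<bind>
     (\<lambda>xs. if n < 2 then map_pmf (\<lambda>x. xs @ [x]) (rad (1/2)) else step p xs)"

definition var_S :: "real \<Rightarrow> nat \<Rightarrow> real" where
  "var_S p n = measure_pmf.variance (walk p n) (\<lambda>xs. sum_list xs)"

end

theory Submission
  imports Defs
begin

lemma exp_bind:
  fixes h :: "'b \<Rightarrow> real"
  assumes "finite (set_pmf p)" "\<And>x. x \<in> set_pmf p \<Longrightarrow> finite (set_pmf (f x))"
  shows "measure_pmf.expectation (p \<bind> f) h = measure_pmf.expectation p (\<lambda>x. measure_pmf.expectation (f x) h)"
proof -
  have "measure_pmf.expectation (p \<bind> f) h = (\<Sum>a\<in>set_pmf p. pmf p a *\<^sub>R measure_pmf.expectation (f a) h)"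
    using assms by (intro pmf_expectation_bind) auto
  also have "\<dots> = measure_pmf.expectation p (\<lambda>x. measure_pmf.expectation (f x) h)"
    using assms by (subst integral_measure_pmf[of "set_pmf p"]) auto
  finally show ?thesis .
qed

lemma set_rad: "set_pmf (rad q) \<subseteq> {-1, 1}"
  unfolding rad_def by auto

lemma finite_rad: "finite (set_pmf (rad q))"
  using set_rad finite_subset by blast

lemma E_rad:
  fixes f :: "real \<Rightarrow> real"
  assumes "0 \<le> q" "q \<le> 1"
  shows "measure_pmf.expectation (rad q) f = q * f 1 + (1 - q) * f (-1)"
  unfolding rad_def using assms by simp

lemma E_unif:
  fixes f :: "nat \<Rightarrow> real"
  assumes "1 \<le> n"
  shows "measure_pmf.expectation (pmf_of_set {1..n}) f = (\<Sum>u\<in>{1..n}. f u) / n"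
  using assms by (subst integral_pmf_of_set) auto

lemma sum_nth_list:
  fixes g :: "real \<Rightarrow> real"
  shows "(\<Sum>u\<in>{1..length xs}. g (xs ! (u - 1))) = sum_list (map g xs)"
proof -
  have "(\<Sum>u\<in>{1..length xs}. g (xs ! (u - 1))) = (\<Sum>i<length xs. g (xs ! i))"
    by (rule sum.reindex_bij_witness[of _ "\<lambda>i. i + 1" "\<lambda>u. u - 1"]) auto
  also have "\<dots> = sum_list (map g xs)"
    by (simp add: sum_list_sum_nth atLeast0LessThan)
  finally show ?thesis .
qed

definition nz :: "real list \<Rightarrow> real" where
  "nz xs = sum_list (map (\<lambda>x. x^2) xs)"

lemma lemY:
  fixes \<phi> :: "real \<Rightarrow> real"
  assumes "set xs \<subseteq> {-1,0,1}"
  shows "sum_list (map (\<lambda>x. p * \<phi> x + (1-p) * \<phi> (-x)) xs) =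
     \<phi> 0 * (length xs - nz xs) + \<phi> 1 * (nz xs + (2*p-1) * sum_list xs) / 2
       + \<phi> (-1) * (nz xs - (2*p-1) * sum_list xs) / 2"
  using assms
proof (induction xs)
  case Nil
  then show ?case by (simp add: nz_def)
next
  case (Cons x xs)
  then have x: "x = -1 \<or> x = 0 \<or> x = 1" and IH: "sum_list (map (\<lambda>x. p * \<phi> x + (1-p) * \<phi> (-x)) xs) =
     \<phi> 0 * (length xs - nz xs) + \<phi> 1 * (nz xs + (2*p-1) * sum_list xs) / 2
       + \<phi> (-1) * (nz xs - (2*p-1) * sum_list xs) / 2" by auto
  have nzc: "nz (x # xs) = x^2 + nz xs" by (simp add: nz_def)
  have "sum_list (map (\<lambda>x. p * \<phi> x + (1-p) * \<phi> (-x)) (x # xs)) = p * \<phi> x + (1-p) * \<phi> (-x) + sum_list (map (\<lambda>x. p * \<phi> x + (1-p) * \<phi> (-x)) xs)"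
    by simp
  also note IH
  finally show ?case unfolding nzc using x
    by (elim disjE) (simp_all add: algebra_simps add_divide_distrib diff_divide_distrib)
qed

lemma fin_bind: "finite (set_pmf M) \<Longrightarrow> (\<And>x. finite (set_pmf (f x))) \<Longrightarrow> finite (set_pmf (bind_pmf M f))"
  by (auto simp: set_bind_pmf)

lemma fin_unif: "1 \<le> n \<Longrightarrow> finite (set_pmf (pmf_of_set {1..(n::nat)}))"
  by simp

lemma exp_bind':
  fixes h :: "'b \<Rightarrow> real"
  assumes "finite (set_pmf p)" "\<And>x. finite (set_pmf (f x))"
  shows "measure_pmf.expectation (bind_pmf p f) h = measure_pmf.expectation p (\<lambda>x. measure_pmf.expectation (f x) h)"
  using assms by (intro exp_bind) auto

lemma finite_step: "1 \<le> length xs \<Longrightarrow> finite (set_pmf (step p xs))"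
  unfolding step_def by (intro fin_bind finite_rad fin_unif) auto

lemma E_step_raw:
  fixes h :: "real list \<Rightarrow> real"
  assumes "1 \<le> length xs" "0 \<le> p" "p \<le> 1"
  defines "\<psi> \<equiv> \<lambda>t. h (xs @ [clamp t])"
  defines "n \<equiv> length xs"
  shows "measure_pmf.expectation (step p xs) h =
    (\<Sum>u1\<in>{1..n}. (\<Sum>u2\<in>{1..n}.
        p * (p * \<psi> (xs!(u1-1) + xs!(u2-1)) + (1-p) * \<psi> (xs!(u1-1) - xs!(u2-1)))
      + (1-p) * (p * \<psi> (- xs!(u1-1) + xs!(u2-1)) + (1-p) * \<psi> (- xs!(u1-1) - xs!(u2-1)))) / n) / n"
proof -
  have n1: "1 \<le> n" using assms by simp
  have F: "\<And>x. finite (set_pmf (return_pmf x))" by simp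
  show ?thesis
    unfolding step_def n_def[symmetric]
    apply (simp only: exp_bind'[OF fin_unif[OF n1]] exp_bind'[OF finite_rad] fin_bind fin_unif[OF n1] finite_rad F)
    apply (simp only: E_unif[OF n1])
    apply (simp add: assms(2,3) E_rad  \<psi>_def)
    done
qed

lemma E_step:
  fixes h :: "real list \<Rightarrow> real"
  assumes len: "1 \<le> length xs" and p: "0 \<le> p" "p \<le> 1" and xs: "set xs \<subseteq> {-1,0,1}"
  defines "n \<equiv> real (length xs)"
  defines "yp \<equiv> (nz xs + (2*p-1) * sum_list xs) / (2*n)"
  defines "ym \<equiv> (nz xs - (2*p-1) * sum_list xs) / (2*n)"
  defines "z \<equiv> 1 - nz xs / n"
  shows "measure_pmf.expectation (step p xs) h =
     (yp^2 + 2*yp*z) * h (xs @ [1]) + (ym^2 + 2*ym*z) * h (xs @ [-1]) + (z^2 + 2*yp*ym) * h (xs @ [0])"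
proof -
  define \<psi> where "\<psi> = (\<lambda>t. h (xs @ [clamp t]))"
  have npos: "n > 0" using len unfolding n_def by (cases xs) auto
  have Y: "\<And>\<phi>. (\<Sum>u\<in>{1..length xs}. p * \<phi> (xs!(u-1)) + (1-p) * \<phi> (- xs!(u-1))) / n
      = z * \<phi> 0 + yp * \<phi> 1 + ym * \<phi> (-1)"
  proof -
    fix \<phi> :: "real \<Rightarrow> real"
    have "(\<Sum>u\<in>{1..length xs}. p * \<phi> (xs!(u-1)) + (1-p) * \<phi> (- xs!(u-1)))
        = sum_list (map (\<lambda>x. p * \<phi> x + (1-p) * \<phi> (-x)) xs)"
      by (rule sum_nth_list[where g = "\<lambda>x. p * \<phi> x + (1-p) * \<phi> (-x)"])
    also have "\<dots> = \<phi> 0 * (length xs - nz xs) + \<phi> 1 * (nz xs + (2*p-1) * sum_list xs) / 2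
       + \<phi> (-1) * (nz xs - (2*p-1) * sum_list xs) / 2" by (rule lemY[OF xs])
    finally have eq: "(\<Sum>u\<in>{1..length xs}. p * \<phi> (xs!(u-1)) + (1-p) * \<phi> (- xs!(u-1))) = \<phi> 0 * (length xs - nz xs) + \<phi> 1 * (nz xs + (2*p-1) * sum_list xs) / 2
       + \<phi> (-1) * (nz xs - (2*p-1) * sum_list xs) / 2" .
    show "(\<Sum>u\<in>{1..length xs}. p * \<phi> (xs!(u-1)) + (1-p) * \<phi> (- xs!(u-1))) / n
      = z * \<phi> 0 + yp * \<phi> 1 + ym * \<phi> (-1)"
      unfolding eq using npos unfolding z_def yp_def ym_def n_def[symmetric] by (simp add: field_simps)
  qed
  define \<Psi> where "\<Psi> = (\<lambda>a. z * \<psi> a + yp * \<psi> (a+1) + ym * \<psi> (a - 1))"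
  have inner: "(\<Sum>u2\<in>{1..length xs}.
        p * (p * \<psi> (a + xs!(u2-1)) + (1-p) * \<psi> (a - xs!(u2-1)))
      + (1-p) * (p * \<psi> (- a + xs!(u2-1)) + (1-p) * \<psi> (- a - xs!(u2-1)))) / n
      = p * \<Psi> a + (1-p) * \<Psi> (-a)" for a
  proof -
    have e1: "(\<Sum>u2\<in>{1..length xs}. p * \<psi> (a + xs!(u2-1)) + (1-p) * \<psi> (a - xs!(u2-1))) / n = \<Psi> a"
      using Y[of "\<lambda>y. \<psi> (a + y)"] unfolding \<Psi>_def by simp
    have e2: "(\<Sum>u2\<in>{1..length xs}. p * \<psi> (- a + xs!(u2-1)) + (1-p) * \<psi> (- a - xs!(u2-1))) / n = \<Psi> (-a)"
      using Y[of "\<lambda>y. \<psi> (- a + y)"] unfolding \<Psi>_def by simp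
    have "(\<Sum>u2\<in>{1..length xs}.
        p * (p * \<psi> (a + xs!(u2-1)) + (1-p) * \<psi> (a - xs!(u2-1)))
      + (1-p) * (p * \<psi> (- a + xs!(u2-1)) + (1-p) * \<psi> (- a - xs!(u2-1))))
      = p * (\<Sum>u2\<in>{1..length xs}. p * \<psi> (a + xs!(u2-1)) + (1-p) * \<psi> (a - xs!(u2-1)))
      + (1-p) * (\<Sum>u2\<in>{1..length xs}. p * \<psi> (- a + xs!(u2-1)) + (1-p) * \<psi> (- a - xs!(u2-1)))"
      by (simp only: sum_distrib_left sum.distrib[symmetric])
    then show ?thesis using e1 e2 npos by (simp add: field_simps)
  qed
  have "measure_pmf.expectation (step p xs) h =
    (\<Sum>u1\<in>{1..length xs}. p * \<Psi> (xs!(u1-1)) + (1-p) * \<Psi> (- xs!(u1-1))) / n"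
  proof -
    have raw: "measure_pmf.expectation (step p xs) h =
    (\<Sum>u1\<in>{1..length xs}. (\<Sum>u2\<in>{1..length xs}.
        p * (p * \<psi> (xs!(u1-1) + xs!(u2-1)) + (1-p) * \<psi> (xs!(u1-1) - xs!(u2-1)))
      + (1-p) * (p * \<psi> (- xs!(u1-1) + xs!(u2-1)) + (1-p) * \<psi> (- xs!(u1-1) - xs!(u2-1)))) / n) / n"
      using E_step_raw[OF len p, of h] unfolding \<psi>_def n_def by simp
    show ?thesis unfolding raw
      by (intro arg_cong[where f="\<lambda>t. t / n"] sum.cong refl inner)
  qed
  also have "\<dots> = z * \<Psi> 0 + yp * \<Psi> 1 + ym * \<Psi> (-1)" by (rule Y)
  also have "\<dots> = (yp^2 + 2*yp*z) * h (xs @ [1]) + (ym^2 + 2*ym*z) * h (xs @ [-1]) + (z^2 + 2*yp*ym) * h (xs @ [0])"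
    unfolding \<Psi>_def \<psi>_def by (simp add: clamp_def algebra_simps power2_eq_square)
  finally show ?thesis .
qed

lemma clamp_vals: "a \<in> {-1,1} \<Longrightarrow> b \<in> {-1,1} \<Longrightarrow> x \<in> {-1,0,1} \<Longrightarrow> y \<in> {-1,0,1}
  \<Longrightarrow> clamp (a * x + b * y) \<in> {-1,0,1::real}"
  by (auto simp: clamp_def)

lemma set_step:
  assumes "1 \<le> length xs" "set xs \<subseteq> {-1,0,1}" "ys \<in> set_pmf (step p xs)"
  shows "\<exists>c\<in>{-1,0,1}. ys = xs @ [c]"
proof -
  have ne: "{1..length xs} \<noteq> {}" using assms(1) by auto
  from assms(3) obtain u1 u2 a1 a2 where u: "u1 \<in> {1..length xs}" "u2 \<in> {1..length xs}"
    and a: "a1 \<in> set_pmf (rad p)" "a2 \<in> set_pmf (rad p)"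
    and ys: "ys = xs @ [clamp (a1 * xs ! (u1 - 1) + a2 * xs ! (u2 - 1))]"
    unfolding step_def using ne by (auto simp: set_bind_pmf)
  have "xs ! (u1 - 1) \<in> set xs" "xs ! (u2 - 1) \<in> set xs" using u by auto
  then have "xs ! (u1 - 1) \<in> {-1,0,1}" "xs ! (u2 - 1) \<in> {-1,0,1}" using assms(2) by auto
  moreover have "a1 \<in> {-1,1}" "a2 \<in> {-1,1}" using a set_rad by auto
  ultimately show ?thesis using ys clamp_vals by blast
qed

lemma walk_support:
  "ys \<in> set_pmf (walk p n) \<Longrightarrow> length ys = n \<and> set ys \<subseteq> {-1,0,1}"
proof (induction n arbitrary: ys)
  case 0
  then show ?case by simp
next
  case (Suc n)
  from Suc.prems obtain xs where xs: "xs \<in> set_pmf (walk p n)"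
    and ys: "ys \<in> set_pmf (if n < 2 then map_pmf (\<lambda>x. xs @ [x]) (rad (1/2)) else step p xs)"
    by (auto simp: set_bind_pmf)
  have IH: "length xs = n" "set xs \<subseteq> {-1,0,1}" using Suc.IH[OF xs] by auto
  show ?case
  proof (cases "n < 2")
    case True
    have "set_pmf (rad (1/2)) \<subseteq> {-1,1}" by (rule set_rad)
    then show ?thesis using ys IH True by auto
  next
    case False
    then have "1 \<le> length xs" using IH by simp
    from set_step[OF this IH(2)] ys False obtain c where "c \<in> {-1,0,1}" "ys = xs @ [c]" by auto
    then show ?thesis using IH by auto
  qed
qed

lemma finite_walk: "finite (set_pmf (walk p n))"
proof (induction n)
  case 0
  then show ?case by simp
next
  case (Suc n)
  have "\<And>xs. xs \<in> set_pmf (walk p n) \<Longrightarrow>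
     finite (set_pmf (if n < 2 then map_pmf (\<lambda>x. xs @ [x]) (rad (1/2)) else step p xs))"
    using walk_support finite_step finite_rad by fastforce
  then show ?case using Suc by (auto simp: set_bind_pmf)
qed

lemma E_walk_step:
  fixes h :: "real list \<Rightarrow> real"
  assumes "2 \<le> n"
  shows "measure_pmf.expectation (walk p (Suc n)) h =
         measure_pmf.expectation (walk p n) (\<lambda>xs. measure_pmf.expectation (step p xs) h)"
proof -
  have "measure_pmf.expectation (walk p (Suc n)) h =
    measure_pmf.expectation (walk p n) (\<lambda>xs. measure_pmf.expectation
       (if n < 2 then map_pmf (\<lambda>x. xs @ [x]) (rad (1/2)) else step p xs) h)"
    unfolding walk.simps
    apply (rule exp_bind)
    apply (rule finite_walk)
    using walk_support finite_step finite_rad assms by fastforce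
  then show ?thesis using assms by simp
qed

lemma E_walk_small:
  fixes h :: "real list \<Rightarrow> real"
  assumes "n < 2"
  shows "measure_pmf.expectation (walk p (Suc n)) h =
         measure_pmf.expectation (walk p n) (\<lambda>xs. h (xs @ [1]) / 2 + h (xs @ [-1]) / 2)"
proof -
  have "measure_pmf.expectation (walk p (Suc n)) h =
    measure_pmf.expectation (walk p n) (\<lambda>xs. measure_pmf.expectation
       (if n < 2 then map_pmf (\<lambda>x. xs @ [x]) (rad (1/2)) else step p xs) h)"
    unfolding walk.simps
    apply (rule exp_bind)
    apply (rule finite_walk)
    using walk_support finite_step finite_rad assms by fastforce
  then show ?thesis using assms by (simp add: E_rad)
qed

lemma E_mono:
  fixes f g :: "'a \<Rightarrow> real"
  assumes "finite (set_pmf M)" "\<And>x. x \<in> set_pmf M \<Longrightarrow> f x \<le> g x"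
  shows "measure_pmf.expectation M f \<le> measure_pmf.expectation M g"
  using assms by (intro integral_mono_AE integrable_measure_pmf_finite) (auto simp: AE_measure_pmf_iff)

lemma E_const: "measure_pmf.expectation M (\<lambda>_. c) = (c::real)"
  by simp

lemma nz_append[simp]: "nz (xs @ [c]) = nz xs + c^2"
  by (simp add: nz_def)

lemma nz_neg[simp]: "nz (map uminus xs) = nz xs"
  by (induction xs) (auto simp: nz_def)

lemma sum_neg[simp]: "sum_list (map uminus xs) = - sum_list (xs::real list)"
  by (induction xs) auto

lemma list_bounds:
  assumes "set xs \<subseteq> {-1,0,1::real}"
  shows "\<bar>sum_list xs\<bar> \<le> nz xs \<and> nz xs \<le> length xs \<and> 0 \<le> nz xs"
  using assms
proof (induction xs)
  case Nil
  then show ?case by (simp add: nz_def)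
next
  case (Cons x xs)
  then have x: "x = -1 \<or> x = 0 \<or> x = 1" and IH: "\<bar>sum_list xs\<bar> \<le> nz xs \<and> nz xs \<le> length xs \<and> 0 \<le> nz xs" by auto
  have "nz (x # xs) = x^2 + nz xs" by (simp add: nz_def)
  then show ?case using x IH by auto
qed

lemma E_cong:
  fixes f g :: "'a \<Rightarrow> real"
  assumes "\<And>x. x \<in> set_pmf M \<Longrightarrow> f x = g x"
  shows "measure_pmf.expectation M f = measure_pmf.expectation M g"
  using assms by (intro integral_cong_AE) (auto simp: AE_measure_pmf_iff)

lemma walk_sym:
  fixes h :: "real list \<Rightarrow> real"
  assumes p: "0 \<le> p" "p \<le> 1"
  shows "measure_pmf.expectation (walk p n) h = measure_pmf.expectation (walk p n) (\<lambda>xs. h (map uminus xs))"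
proof (induction n arbitrary: h)
  case 0
  then show ?case by simp
next
  case (Suc n)
  show ?case
  proof (cases "n < 2")
    case True
    have "measure_pmf.expectation (walk p (Suc n)) (\<lambda>xs. h (map uminus xs))
       = measure_pmf.expectation (walk p n) (\<lambda>xs. h (map uminus xs @ [-1]) / 2 + h (map uminus xs @ [1]) / 2)"
      using E_walk_small[OF True] by simp
    also have "\<dots> = measure_pmf.expectation (walk p n) (\<lambda>xs. h (xs @ [-1]) / 2 + h (xs @ [1]) / 2)"
      using Suc.IH[of "\<lambda>xs. h (xs @ [-1]) / 2 + h (xs @ [1]) / 2"] by simp
    also have "\<dots> = measure_pmf.expectation (walk p (Suc n)) h"
      using E_walk_small[OF True] by (simp add: add.commute)
    finally show ?thesis ..
  next
    case False
    then have n2: "2 \<le> n" by simp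
    have "measure_pmf.expectation (walk p (Suc n)) (\<lambda>xs. h (map uminus xs))
       = measure_pmf.expectation (walk p n) (\<lambda>xs. measure_pmf.expectation (step p xs) (\<lambda>xs. h (map uminus xs)))"
      by (rule E_walk_step[OF n2])
    also have "\<dots> = measure_pmf.expectation (walk p n) (\<lambda>xs. measure_pmf.expectation (step p (map uminus xs)) h)"
    proof (rule E_cong)
      fix xs assume "xs \<in> set_pmf (walk p n)"
      then have l: "length xs = n" and s: "set xs \<subseteq> {-1,0,1}" using walk_support by auto
      have l1: "1 \<le> length xs" "1 \<le> length (map uminus xs)" using l n2 by auto
      have s': "set (map uminus xs) \<subseteq> {-1,0,1}" using s by auto
      show "measure_pmf.expectation (step p xs) (\<lambda>xs. h (map uminus xs)) = measure_pmf.expectation (step p (map uminus xs)) h"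
        unfolding E_step[OF l1(1) p s] E_step[OF l1(2) p s'] by (simp add: ac_simps) (simp add: algebra_simps)
    qed
    also have "\<dots> = measure_pmf.expectation (walk p n) (\<lambda>xs. measure_pmf.expectation (step p xs) h)"
      using Suc.IH[of "\<lambda>xs. measure_pmf.expectation (step p xs) h"] by simp
    also have "\<dots> = measure_pmf.expectation (walk p (Suc n)) h"
      by (rule E_walk_step[OF n2, symmetric])
    finally show ?thesis ..
  qed
qed

lemma mean_zero:
  assumes "0 \<le> p" "p \<le> 1"
  shows "measure_pmf.expectation (walk p n) sum_list = 0"
proof -
  have "measure_pmf.expectation (walk p n) sum_list = measure_pmf.expectation (walk p n) (\<lambda>xs. - sum_list xs)"
    using walk_sym[OF assms, of n sum_list] by simp
  also have "\<dots> = - measure_pmf.expectation (walk p n) sum_list" by simp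
  finally show ?thesis by simp
qed

lemma var_eq:
  assumes "0 \<le> p" "p \<le> 1"
  shows "var_S p n = measure_pmf.expectation (walk p n) (\<lambda>xs. (sum_list xs)^2)"
proof -
  have "var_S p n = measure_pmf.expectation (walk p n) (\<lambda>xs. (sum_list xs)^2) - (measure_pmf.expectation (walk p n) sum_list)^2"
    unfolding var_S_def
    by (rule measure_pmf.variance_eq) (auto intro: integrable_measure_pmf_finite finite_walk)
  then show ?thesis using mean_zero[OF assms] by simp
qed

lemma ES2_upper:
  "measure_pmf.expectation (walk p n) (\<lambda>xs. (sum_list xs)^2) \<le> real n ^ 2"
proof -
  have "measure_pmf.expectation (walk p n) (\<lambda>xs. (sum_list xs)^2) \<le> measure_pmf.expectation (walk p n) (\<lambda>_. real n ^ 2)"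
  proof (rule E_mono[OF finite_walk])
    fix xs assume "xs \<in> set_pmf (walk p n)"
    then have "length xs = n" "set xs \<subseteq> {-1,0,1}" using walk_support by auto
    then have "\<bar>sum_list xs\<bar> \<le> real n" using list_bounds by fastforce
    then show "(sum_list xs)^2 \<le> real n ^ 2"
      by (metis abs_ge_zero order_trans power2_abs power_mono)
  qed
  then show ?thesis by simp
qed

lemma PI:
  fixes m q h c qs us c0 :: real
  assumes m1: "\<bar>m\<bar> \<le> 1" and q0: "0 \<le> q" and q1: "q \<le> 1" and qs0: "0 \<le> qs" and qs1: "qs \<le> 1"
    and us: "us > 0" and c0: "c0 > 0" and h0: "0 \<le> h" and h1: "h \<le> 1"
    and cm: "\<bar>c - m\<bar> \<le> 2" and cq: "\<bar>c^2 - q\<bar> \<le> 1"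
  shows "(m + h*(c-m))^2 * exp (-((m + h*(c-m))^2)/us - c0*((q + h*(c^2-q)) - qs)^2)
    \<ge> exp (-(m^2)/us - c0*(q-qs)^2) *
       (m^2 + 2*m*(1 - m^2/us)*(h*(c-m)) - 2*c0*m^2*(q-qs)*(h*(c^2-q)) - (68/us + 25*c0)*h^2)"
proof -
  define d where "d = h*(c-m)"
  define e where "e = h*(c^2-q)"
  define x where "x = q - qs"
  define A where "A = -(m^2)/us - c0*(q-qs)^2"
  define \<Delta> where "\<Delta> = -(2*m*d + d^2)/us - c0*(2*x*e + e^2)"
  have A': "-((m + h*(c-m))^2)/us - c0*((q + h*(c^2-q)) - qs)^2 = A + \<Delta>"
    unfolding A_def \<Delta>_def d_def e_def x_def using us by (simp add: power2_eq_square field_simps)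
  have dabs: "\<bar>d\<bar> \<le> 2*h" unfolding d_def using cm h0 by (simp add: abs_mult mult_left_mono mult.commute)
  have eabs: "\<bar>e\<bar> \<le> h" unfolding e_def using cq h0 by (simp add: abs_mult) (metis mult_left_mono mult.right_neutral)
  have xabs: "\<bar>x\<bar> \<le> 1" unfolding x_def using q0 q1 qs0 qs1 by auto
  have hh: "h^2 \<le> h" using h0 h1 by (simp add: power2_eq_square mult_left_le)
  have d2: "d^2 \<le> 4*h^2"
  proof -
    have "d^2 = \<bar>d\<bar>^2" by simp
    also have "\<dots> \<le> (2*h)^2" by (rule power_mono[OF dabs]) simp
    finally show ?thesis by (simp add: power2_eq_square)
  qed
  have e2: "e^2 \<le> h^2"
  proof -
    have "e^2 = \<bar>e\<bar>^2" by simp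
    also have "\<dots> \<le> h^2" by (rule power_mono[OF eabs]) simp
    finally show ?thesis .
  qed
  have m2: "m^2 \<le> 1" using m1 by (metis abs_ge_zero abs_one power2_abs power_mono one_power2)
  have md: "\<bar>m*d\<bar> \<le> 2*h"
  proof -
    have "\<bar>m*d\<bar> = \<bar>m\<bar>*\<bar>d\<bar>" by (simp add: abs_mult)
    also have "\<dots> \<le> 1 * (2*h)" by (rule mult_mono[OF m1 dabs]) auto
    finally show ?thesis by simp
  qed
  have xe: "\<bar>x*e\<bar> \<le> h"
  proof -
    have "\<bar>x*e\<bar> = \<bar>x\<bar>*\<bar>e\<bar>" by (simp add: abs_mult)
    also have "\<dots> \<le> 1 * h" by (rule mult_mono[OF xabs eabs]) auto
    finally show ?thesis by simp
  qed
  have T1: "\<bar>2*m*d + d^2\<bar> \<le> 8*h"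
  proof -
    have "\<bar>2*m*d + d^2\<bar> \<le> 2*\<bar>m*d\<bar> + d^2" using abs_triangle_ineq[of "2*m*d" "d^2"] by (simp add: abs_mult)
    then show ?thesis using md d2 hh by linarith
  qed
  have T2: "\<bar>\<Delta>\<bar> \<le> 8*h/us + 3*c0*h"
  proof -
    have a: "\<bar>-(2*m*d + d^2)/us\<bar> \<le> 8*h/us"
      using T1 us by (simp add: divide_right_mono)
    have b0: "\<bar>2*x*e + e^2\<bar> \<le> 3*h"
    proof -
      have "\<bar>2*x*e + e^2\<bar> \<le> 2*\<bar>x*e\<bar> + e^2" using abs_triangle_ineq[of "2*x*e" "e^2"] by (simp add: abs_mult)
      then show ?thesis using xe e2 hh by linarith
    qed
    have b: "\<bar>c0*(2*x*e + e^2)\<bar> \<le> 3*c0*h"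
      using b0 c0 by (simp add: abs_mult mult_left_mono mult.commute mult.left_commute)
    have "\<bar>\<Delta>\<bar> \<le> \<bar>-(2*m*d + d^2)/us\<bar> + \<bar>c0*(2*x*e + e^2)\<bar>" unfolding \<Delta>_def by (rule abs_triangle_ineq4)
    then show ?thesis using a b by linarith
  qed
  have T3: "\<bar>(2*m*d + d^2)*\<Delta>\<bar> \<le> 8*h*(8*h/us + 3*c0*h)"
    unfolding abs_mult by (rule mult_mono[OF T1 T2]) (use h0 in auto)
  have T4: "m^2*d^2/us \<le> 4*h^2/us"
  proof -
    have "m^2*d^2 \<le> 1*(4*h^2)" by (rule mult_mono[OF m2 d2]) auto
    then show ?thesis using us by (simp add: divide_right_mono)
  qed
  have T5: "c0*m^2*e^2 \<le> c0*h^2"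
  proof -
    have "m^2*e^2 \<le> 1*h^2" by (rule mult_mono[OF m2 e2]) auto
    then show ?thesis using c0 by (simp add: mult.assoc mult_left_mono)
  qed
  have R: "(m + d)^2 * (1 + \<Delta>) = m^2 + 2*m*(1 - m^2/us)*d - 2*c0*m^2*x*e
      + (d^2 - m^2*d^2/us - c0*m^2*e^2 + (2*m*d + d^2)*\<Delta>)"
    unfolding \<Delta>_def using us by (simp add: power2_eq_square field_simps)
  have Rb: "(d^2 - m^2*d^2/us - c0*m^2*e^2 + (2*m*d + d^2)*\<Delta>) \<ge> - ((68/us + 25*c0)*h^2)"
  proof -
    have "(2*m*d + d^2)*\<Delta> \<ge> - (8*h*(8*h/us + 3*c0*h))" using T3 by linarith
    moreover have "8*h*(8*h/us + 3*c0*h) = 64*h^2/us + 24*c0*h^2" by (simp add: power2_eq_square field_simps)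
    moreover have "(68/us + 25*c0)*h^2 = 4*h^2/us + c0*h^2 + (64*h^2/us + 24*c0*h^2)" by (simp add: field_simps)
    moreover have "d^2 \<ge> 0" by simp
    ultimately show ?thesis using T4 T5 by linarith
  qed
  have main: "(m + d)^2 * (1 + \<Delta>) \<ge> m^2 + 2*m*(1 - m^2/us)*d - 2*c0*m^2*x*e - (68/us + 25*c0)*h^2"
    using R Rb by linarith
  have "exp (A + \<Delta>) \<ge> exp A * (1 + \<Delta>)"
    by (simp add: exp_add mult_left_mono)
  then have "(m + d)^2 * exp (A + \<Delta>) \<ge> (m+d)^2 * (exp A * (1 + \<Delta>))"
    by (simp add: mult_left_mono)
  also have "(m+d)^2 * (exp A * (1 + \<Delta>)) = exp A * ((m + d)^2 * (1 + \<Delta>))" by simp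
  finally have "(m + d)^2 * exp (A + \<Delta>) \<ge> exp A * (m^2 + 2*m*(1 - m^2/us)*d - 2*c0*m^2*x*e - (68/us + 25*c0)*h^2)"
    using main by (smt (verit) exp_gt_zero mult_left_mono)
  then show ?thesis unfolding A' unfolding A_def d_def e_def x_def by (simp add: mult.assoc)
qed

lemma Lsum:
  fixes r qs us c0 m q h :: real
  assumes r: "r \<noteq> 0" and us: "us \<noteq> 0"
    and qs: "r * qs = 2*r - 1" and usd: "r^2 * us = 3*qs^2 - 2*qs" and c0: "c0 * r * us = 2"
  defines "yp \<equiv> (q + r*m)/2" and "ym \<equiv> (q - r*m)/2" and "z \<equiv> 1 - q"
  defines "L \<equiv> \<lambda>c. 2*m*(1 - m^2/us)*(h*(c-m)) - 2*c0*m^2*(q-qs)*(h*(c^2-q))"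
  shows "(yp^2 + 2*yp*z) * L 1 + (ym^2 + 2*ym*z) * L (-1) + (z^2 + 2*yp*ym) * L 0
         = h * m^2 * 2 * c0 * (q-qs)^2 * (3/2*(q+qs) - 1)"
proof -
  define P1 where "P1 = yp^2 + 2*yp*z"
  define P2 where "P2 = ym^2 + 2*ym*z"
  define P0 where "P0 = z^2 + 2*yp*ym"
  have S: "P1 + P2 + P0 = 1" unfolding P1_def P2_def P0_def yp_def ym_def z_def
    by (simp add: power2_eq_square field_simps)
  have EX: "P1 - P2 = r*m*(2-q)" unfolding P1_def P2_def yp_def ym_def z_def
    by (simp add: power2_eq_square field_simps)
  have EX2: "P1 + P2 = 2*q - 3/2*q^2 + r^2*m^2/2" unfolding P1_def P2_def yp_def ym_def z_def
    by (simp add: power2_eq_square field_simps)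
  define a where "a = 2*m*(1 - m^2/us)*h"
  define b where "b = 2*c0*m^2*(q-qs)*h"
  have Lc: "\<And>c. L c = a*(c - m) - b*(c^2 - q)" unfolding L_def a_def b_def by (simp add: algebra_simps)
  have "P1 * L 1 + P2 * L (-1) + P0 * L 0 = a*((P1 - P2) - m*(P1+P2+P0)) - b*((P1+P2) - q*(P1+P2+P0))"
    unfolding Lc by (simp add: algebra_simps)
  also have "\<dots> = a*(m*(r*(2-q) - 1)) - b*(2*q - 3/2*q^2 + r^2*m^2/2 - q)"
  proof -
    have u1: "(P1 - P2) - m*(P1+P2+P0) = r*m*(2-q) - m*1" by (simp only: S EX)
    have u2: "(P1 + P2) - q*(P1+P2+P0) = (2*q - 3/2*q^2 + r^2*m^2/2) - q*1" unfolding S by (simp only: EX2)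
    show ?thesis unfolding u1 u2 by (simp add: algebra_simps)
  qed
  also have "r*(2-q) - 1 = r*(qs - q)" using qs by (simp add: algebra_simps)
  also have "2*q - 3/2*q^2 + r^2*m^2/2 - q = (q-qs)*(1 - 3/2*(q+qs)) + r^2*(m^2 - us)/2"
    using usd unfolding power2_eq_square by (simp add: field_simps; linarith)
  finally have E1: "P1 * L 1 + P2 * L (-1) + P0 * L 0 =
     a * (m * (r * (qs - q))) - b * ((q - qs) * (1 - 3 / 2 * (q + qs)) + r\<^sup>2 * (m\<^sup>2 - us) / 2)" .
  have c0r: "c0 * r^2 = 2*r/us" using c0 us r by (simp add: field_simps power2_eq_square)
  have br: "b * r^2 = 2*m^2*(q-qs)*h * (c0*r^2)" unfolding b_def by (simp add: algebra_simps)
  have "a * (m * (r * (qs - q))) - b * ((q - qs) * (1 - 3 / 2 * (q + qs)) + r\<^sup>2 * (m\<^sup>2 - us) / 2)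
     = - b * (q - qs) * (1 - 3 / 2 * (q + qs)) + (a * (m * (r * (qs - q))) - (b * r^2) * (m^2 - us)/2)"
    by (simp add: field_simps)
  also note br
  also have "a * (m * (r * (qs - q))) - 2*m^2*(q-qs)*h * (c0*r^2) * (m^2 - us)/2 = 0"
    unfolding c0r a_def using us by (simp add: field_simps power2_eq_square)
  finally show ?thesis using E1 unfolding P1_def P2_def P0_def b_def by (simp add: algebra_simps power2_eq_square)
qed

definition rr :: "real \<Rightarrow> real" where "rr p = 2*p - 1"
definition qs :: "real \<Rightarrow> real" where "qs p = 2 - 1 / rr p"
definition us :: "real \<Rightarrow> real" where "us p = (3 * (qs p)^2 - 2 * qs p) / (rr p)^2"
definition cc :: "real \<Rightarrow> real" where "cc p = 2 / (rr p * us p)"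
definition KK :: "real \<Rightarrow> real" where "KK p = 68 / us p + 25 * cc p"
definition Phi :: "real \<Rightarrow> real list \<Rightarrow> real" where
  "Phi p xs = (sum_list xs / length xs)^2 *
      exp (-((sum_list xs / length xs)^2) / us p - cc p * (nz xs / length xs - qs p)^2)"

lemma params:
  assumes "7/8 < p" "p < 1"
  shows "3/4 < rr p" "rr p < 1" "2/3 < qs p" "qs p < 1" "us p > 0" "cc p > 0" "KK p > 0"
    "rr p * qs p = 2 * rr p - 1" "(rr p)^2 * us p = 3 * (qs p)^2 - 2 * qs p" "cc p * rr p * us p = 2"
proof -
  show r1: "3/4 < rr p" "rr p < 1" using assms unfolding rr_def by auto
  have rpos: "rr p > 0" using r1 by simp
  have "1 / rr p < 4/3" using r1 rpos by (simp add: field_simps)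
  then show q1: "2/3 < qs p" unfolding qs_def by simp
  have "1 / rr p > 1" using r1 rpos by (simp add: field_simps)
  then show "qs p < 1" unfolding qs_def by simp
  have "3 * (qs p)^2 - 2 * qs p = qs p * (3 * qs p - 2)" by (simp add: power2_eq_square algebra_simps)
  moreover have "qs p * (3 * qs p - 2) > 0" using q1 by simp
  ultimately show u: "us p > 0" unfolding us_def using rpos by simp
  then show c: "cc p > 0" unfolding cc_def using rpos by simp
  show "KK p > 0" unfolding KK_def using u c by (simp add: add_pos_pos)
  show "rr p * qs p = 2 * rr p - 1" unfolding qs_def using rpos by (simp add: field_simps)
  show "(rr p)^2 * us p = 3 * (qs p)^2 - 2 * qs p" unfolding us_def using rpos by simp
  show "cc p * rr p * us p = 2" unfolding cc_def using rpos u by simp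
qed

lemma upd:
  assumes "(n::real) > 0" shows "(a + b)/(n + 1) = a/n + 1/(n+1) * (b - a/n)"
proof -
  have h: "n \<noteq> 0" "n + 1 \<noteq> 0" using assms by auto
  have "(a/n + 1/(n+1) * (b - a/n)) * (n+1) = a/n*(n+1) + (b - a/n)"
    using h by (simp add: distrib_right)
  also have "\<dots> = a + b" using h by (simp add: distrib_left)
  finally have "(a/n + 1/(n+1) * (b - a/n)) * (n+1) = a + b" .
  then show ?thesis using h by (metis nonzero_eq_divide_eq)
qed

lemma KS:
  assumes p: "7/8 < p" "p < 1" and len: "1 \<le> length xs" and xs: "set xs \<subseteq> {-1,0,1}"
  shows "measure_pmf.expectation (step p xs) (Phi p) \<ge> Phi p xs - KK p / (real (length xs) + 1)^2"
proof -
  note P = params[OF p]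
  define n where "n = real (length xs)"
  define s where "s = sum_list xs"
  define N where "N = nz xs"
  define m where "m = s / n"
  define q where "q = N / n"
  define h where "h = 1 / (n + 1)"
  define r where "r = rr p"
  define A where "A = -(m^2)/us p - cc p*(q - qs p)^2"
  define L where "L = (\<lambda>c. 2*m*(1 - m^2/us p)*(h*(c-m)) - 2*cc p*m^2*(q-qs p)*(h*(c^2-q)))"
  have npos: "n > 0" using len unfolding n_def by (cases xs) auto
  have lb: "\<bar>s\<bar> \<le> N" "N \<le> n" "0 \<le> N" using list_bounds[OF xs] unfolding s_def N_def n_def by auto
  have am: "\<bar>m\<bar> = \<bar>s\<bar> / n" unfolding m_def using npos by (simp add: abs_divide)
  have mq: "\<bar>m\<bar> \<le> q" unfolding am q_def using lb(1) npos by (intro divide_right_mono) auto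
  have q0: "0 \<le> q" and q1: "q \<le> 1" unfolding q_def using lb npos by auto
  have m1: "\<bar>m\<bar> \<le> 1" using mq q1 by linarith
  have h0: "0 \<le> h" and h1: "h \<le> 1" unfolding h_def using npos by auto
  have Phi0: "Phi p xs = m^2 * exp A" unfolding Phi_def A_def m_def q_def s_def N_def n_def by simp
  have PhiC: "Phi p (xs @ [c]) \<ge> exp A * (m^2 + L c - KK p * h^2)" if c: "c \<in> {-1,0,1}" for c
  proof -
    have e1: "sum_list (xs @ [c]) / real (length (xs @ [c])) = m + h*(c-m)"
    proof -
      have "sum_list (xs@[c]) = s + c" "real (length (xs@[c])) = n + 1" unfolding s_def n_def by auto
      then show ?thesis unfolding m_def h_def using upd[OF npos, of s c] by (simp add: add.commute)
    qed
    have e2: "nz (xs @ [c]) / real (length (xs @ [c])) = q + h*(c^2-q)"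
    proof -
      have "nz (xs@[c]) = N + c^2" "real (length (xs@[c])) = n + 1" unfolding N_def n_def by auto
      then show ?thesis unfolding q_def h_def using upd[OF npos, of N "c^2"] by (simp add: add.commute)
    qed
    have cm: "\<bar>c - m\<bar> \<le> 2" using c m1 by auto
    have cq: "\<bar>c^2 - q\<bar> \<le> 1" using c q0 q1 by auto
    have "Phi p (xs @ [c]) = (m + h*(c-m))^2 * exp (-((m + h*(c-m))^2)/us p - cc p*((q + h*(c^2-q)) - qs p)^2)"
      unfolding Phi_def e1 e2 ..
    also have "\<dots> \<ge> exp A * (m^2 + 2*m*(1 - m^2/us p)*(h*(c-m)) - 2*cc p*m^2*(q-qs p)*(h*(c^2-q)) - (68/us p + 25*cc p)*h^2)"
      unfolding A_def
      by (rule PI[OF m1 q0 q1]) (use P cm cq h0 h1 in auto)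
    finally show ?thesis unfolding L_def KK_def by (simp add: algebra_simps)
  qed
  define yp where "yp = (nz xs + (2*p-1) * sum_list xs) / (2*n)"
  define ym where "ym = (nz xs - (2*p-1) * sum_list xs) / (2*n)"
  define z where "z = 1 - nz xs / n"
  have yp': "yp = (q + r*m)/2" unfolding yp_def q_def m_def r_def rr_def N_def s_def using npos by (simp add: field_simps)
  have ym': "ym = (q - r*m)/2" unfolding ym_def q_def m_def r_def rr_def N_def s_def using npos by (simp add: field_simps)
  have z': "z = 1 - q" unfolding z_def q_def N_def by simp
  have rm: "\<bar>r*m\<bar> \<le> q"
  proof -
    have "\<bar>r*m\<bar> = \<bar>r\<bar>*\<bar>m\<bar>" by (simp add: abs_mult)
    also have "\<dots> \<le> 1*\<bar>m\<bar>" using P by (intro mult_right_mono) (auto simp: r_def)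
    finally show ?thesis using mq by simp
  qed
  have ypos: "yp \<ge> 0" "ym \<ge> 0" "z \<ge> 0" unfolding yp' ym' z' using rm q1 by auto
  define P1 where "P1 = yp^2 + 2*yp*z"
  define P2 where "P2 = ym^2 + 2*ym*z"
  define P0 where "P0 = z^2 + 2*yp*ym"
  have Ppos: "P1 \<ge> 0" "P2 \<ge> 0" "P0 \<ge> 0" unfolding P1_def P2_def P0_def using ypos by auto
  have Psum: "P1 + P2 + P0 = 1" unfolding P1_def P2_def P0_def yp' ym' z' by (simp add: power2_eq_square field_simps)
  have ES: "measure_pmf.expectation (step p xs) (Phi p) = P1 * Phi p (xs @ [1]) + P2 * Phi p (xs @ [-1]) + P0 * Phi p (xs @ [0])"
    unfolding P1_def P2_def P0_def yp_def ym_def z_def n_def using E_step[OF len _ _ xs, of p "Phi p"] p by simp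
  have low: "P1 * (exp A * (m^2 + L 1 - KK p * h^2)) + P2 * (exp A * (m^2 + L (-1) - KK p * h^2)) + P0 * (exp A * (m^2 + L 0 - KK p * h^2))
     \<le> P1 * Phi p (xs @ [1]) + P2 * Phi p (xs @ [-1]) + P0 * Phi p (xs @ [0])"
    using PhiC[of 1] PhiC[of "-1"] PhiC[of 0] Ppos by (intro add_mono mult_left_mono) auto
  have eqA: "P1 * (exp A * (m^2 + L 1 - KK p * h^2)) + P2 * (exp A * (m^2 + L (-1) - KK p * h^2)) + P0 * (exp A * (m^2 + L 0 - KK p * h^2))
     = exp A * ((m^2 - KK p * h^2) * (P1 + P2 + P0) + (P1 * L 1 + P2 * L (-1) + P0 * L 0))"
    by (simp add: algebra_simps)
  have LS: "P1 * L 1 + P2 * L (-1) + P0 * L 0 = h * m^2 * 2 * cc p * (q - qs p)^2 * (3/2*(q + qs p) - 1)"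
    unfolding P1_def P2_def P0_def yp' ym' z' L_def
    by (rule Lsum) (use P in \<open>auto simp: r_def\<close>)
  have E1: "measure_pmf.expectation (step p xs) (Phi p) \<ge> exp A * ((m^2 - KK p * h^2) + h * m^2 * 2 * cc p * (q - qs p)^2 * (3/2*(q + qs p) - 1))"
    using low[unfolded eqA[unfolded Psum LS]] unfolding ES by simp
  have nonneg: "h * m^2 * 2 * cc p * (q - qs p)^2 * (3/2*(q + qs p) - 1) \<ge> 0"
    using P h0 q0 by simp
  have Aneg: "A \<le> 0"
  proof -
    have "m^2/us p \<ge> 0" "cc p * (q - qs p)^2 \<ge> 0" using P by simp_all
    then show ?thesis unfolding A_def by linarith
  qed
  have eA: "exp A \<le> 1" "exp A > 0" using Aneg by auto
  have "exp A * ((m^2 - KK p * h^2) + h * m^2 * 2 * cc p * (q - qs p)^2 * (3/2*(q + qs p) - 1)) \<ge> exp A * (m^2 - KK p * h^2)"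
    using nonneg eA by (simp add: mult_left_mono)
  moreover have "exp A * (m^2 - KK p * h^2) \<ge> m^2 * exp A - KK p * h^2"
  proof -
    have "exp A * (KK p * h^2) \<le> 1 * (KK p * h^2)" using eA P by (intro mult_right_mono) auto
    then show ?thesis by (simp add: algebra_simps)
  qed
  moreover have "KK p * h^2 = KK p / (real (length xs) + 1)^2" unfolding h_def n_def by (simp add: power2_eq_square)
  ultimately show ?thesis using E1 Phi0 by linarith
qed

lemma E_diff_const:
  fixes f :: "'a \<Rightarrow> real"
  assumes "finite (set_pmf M)"
  shows "measure_pmf.expectation M (\<lambda>x. f x - c) = measure_pmf.expectation M f - c"
  using assms by (subst Bochner_Integration.integral_diff) (auto intro: integrable_measure_pmf_finite)

lemma Lyap_step:
  assumes p: "7/8 < p" "p < 1" and n: "2 \<le> n"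
  shows "measure_pmf.expectation (walk p (Suc n)) (Phi p) \<ge> measure_pmf.expectation (walk p n) (Phi p) - KK p / (real n + 1)^2"
proof -
  have "measure_pmf.expectation (walk p n) (Phi p) - KK p / (real n + 1)^2
      = measure_pmf.expectation (walk p n) (\<lambda>xs. Phi p xs - KK p / (real n + 1)^2)"
    by (rule E_diff_const[OF finite_walk, symmetric])
  also have "\<dots> \<le> measure_pmf.expectation (walk p n) (\<lambda>xs. measure_pmf.expectation (step p xs) (Phi p))"
  proof (rule E_mono[OF finite_walk])
    fix xs assume "xs \<in> set_pmf (walk p n)"
    then have l: "length xs = n" and s: "set xs \<subseteq> {-1,0,1}" using walk_support by auto
    have "1 \<le> length xs" using l n by simp
    from KS[OF p this s] show "Phi p xs - KK p / (real n + 1)^2 \<le> measure_pmf.expectation (step p xs) (Phi p)"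
      using l by simp
  qed
  also have "\<dots> = measure_pmf.expectation (walk p (Suc n)) (Phi p)"
    by (rule E_walk_step[OF n, symmetric])
  finally show ?thesis .
qed

lemma Lyap_tele:
  assumes p: "7/8 < p" "p < 1" and n0: "2 \<le> n0" and n: "n0 \<le> n"
  shows "measure_pmf.expectation (walk p n) (Phi p) \<ge> measure_pmf.expectation (walk p n0) (Phi p) - KK p / n0 + KK p / n"
  using n
proof (induction n rule: dec_induct)
  case base
  then show ?case by simp
next
  case (step n)
  have n2: "2 \<le> n" using step n0 by simp
  have npos: "real n > 0" using n2 by simp
  have K: "KK p > 0" using params[OF p] by simp
  have ineq: "1 / real n - 1 / (real n + 1)^2 \<ge> 1 / (real n + 1)"
  proof -
    have "1 / real n - 1 / (real n + 1) = 1 / (real n * (real n + 1))" using npos by (simp add: field_simps)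
    also have "\<dots> \<ge> 1 / ((real n + 1) * (real n + 1))"
      using npos by (intro divide_left_mono mult_right_mono) auto
    finally show ?thesis by (simp add: power2_eq_square)
  qed
  have H: "KK p / real n - KK p / (real n + 1)^2 \<ge> KK p / (real n + 1)"
    using mult_left_mono[OF ineq, of "KK p"] K by (simp add: field_simps)
  have RS: "real (Suc n) = real n + 1" by simp
  show ?case unfolding RS using step.IH Lyap_step[OF p n2] H by linarith
qed

lemma ES2_step:
  assumes p: "7/8 < p" "p < 1" and len: "1 \<le> length xs" and xs: "set xs \<subseteq> {-1,0,1}"
  shows "measure_pmf.expectation (step p xs) (\<lambda>ys. (sum_list ys)^2) \<ge> (sum_list xs)^2 * (1 + 2 * rr p / length xs)"
proof -
  note P = params[OF p]
  define n where "n = real (length xs)"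
  define s where "s = sum_list xs"
  define N where "N = nz xs"
  have npos: "n > 0" using len unfolding n_def by (cases xs) auto
  have lb: "\<bar>s\<bar> \<le> N" "N \<le> n" "0 \<le> N" using list_bounds[OF xs] unfolding s_def N_def n_def by auto
  define yp where "yp = (nz xs + (2*p-1) * sum_list xs) / (2*n)"
  define ym where "ym = (nz xs - (2*p-1) * sum_list xs) / (2*n)"
  define z where "z = 1 - nz xs / n"
  define P1 where "P1 = yp^2 + 2*yp*z"
  define P2 where "P2 = ym^2 + 2*ym*z"
  define P0 where "P0 = z^2 + 2*yp*ym"
  have ES: "measure_pmf.expectation (step p xs) (\<lambda>ys. (sum_list ys)^2) = P1 * (s+1)^2 + P2 * (s-1)^2 + P0 * s^2"
    unfolding P1_def P2_def P0_def yp_def ym_def z_def n_def s_def using E_step[OF len _ _ xs, of p "\<lambda>ys. (sum_list ys)^2"] p by simp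
  have Psum: "P1 + P2 + P0 = 1" unfolding P1_def P2_def P0_def yp_def ym_def z_def using npos
    by (simp add: power2_eq_square field_simps)
  have Pd: "P1 - P2 = rr p * (s / n) * (2 - N / n)" unfolding P1_def P2_def yp_def ym_def z_def rr_def s_def N_def using npos
    by (simp add: power2_eq_square field_simps)
  have ypos: "yp \<ge> 0" "ym \<ge> 0" "z \<ge> 0"
  proof -
    have rs: "\<bar>(2*p-1) * s\<bar> \<le> N"
    proof -
      have "\<bar>(2*p-1) * s\<bar> = \<bar>2*p-1\<bar> * \<bar>s\<bar>" by (simp add: abs_mult)
      also have "\<dots> \<le> 1 * \<bar>s\<bar>" using p by (intro mult_right_mono) auto
      finally show ?thesis using lb by simp
    qed
    show "yp \<ge> 0" unfolding yp_def using rs npos unfolding N_def s_def by (intro divide_nonneg_pos) auto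
    show "ym \<ge> 0" unfolding ym_def using rs npos unfolding N_def s_def by (intro divide_nonneg_pos) auto
    show "z \<ge> 0" unfolding z_def using lb npos unfolding N_def n_def by simp
  qed
  have P12: "P1 + P2 \<ge> 0" unfolding P1_def P2_def using ypos by simp
  have "P1 * (s+1)^2 + P2 * (s-1)^2 + P0 * s^2 = s^2 * (P1 + P2 + P0) + 2 * s * (P1 - P2) + (P1 + P2)"
    by (simp add: power2_eq_square algebra_simps)
  also have "\<dots> = s^2 + 2 * rr p * s^2 / n * (2 - N/n) + (P1 + P2)"
    unfolding Psum Pd by (simp add: power2_eq_square)
  finally have E1: "measure_pmf.expectation (step p xs) (\<lambda>ys. (sum_list ys)^2) = s^2 + 2 * rr p * s^2 / n * (2 - N/n) + (P1 + P2)"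
    using ES by simp
  have q1: "N / n \<le> 1" using lb npos by simp
  have "2 * rr p * s^2 / n * (2 - N/n) \<ge> 2 * rr p * s^2 / n * 1"
    using P npos q1 by (intro mult_left_mono) auto
  then show ?thesis using E1 P12 unfolding s_def[symmetric] n_def[symmetric] by (simp add: algebra_simps)
qed

abbreviation g where "g p n \<equiv> measure_pmf.expectation (walk p n) (\<lambda>xs. (sum_list xs)^2)"

lemma g_nonneg: "g p n \<ge> 0"
  by simp

lemma g_step:
  assumes p: "7/8 < p" "p < 1" and n: "2 \<le> n"
  shows "g p (Suc n) \<ge> g p n * (1 + 2 * rr p / n)"
proof -
  have "g p n * (1 + 2 * rr p / n) = measure_pmf.expectation (walk p n) (\<lambda>xs. (sum_list xs)^2 * (1 + 2 * rr p / n))"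
    by simp
  also have "\<dots> \<le> measure_pmf.expectation (walk p n) (\<lambda>xs. measure_pmf.expectation (step p xs) (\<lambda>ys. (sum_list ys)^2))"
  proof (rule E_mono[OF finite_walk])
    fix xs assume "xs \<in> set_pmf (walk p n)"
    then have l: "length xs = n" and s: "set xs \<subseteq> {-1,0,1}" using walk_support by auto
    have "1 \<le> length xs" using l n by simp
    from ES2_step[OF p this s] show "(sum_list xs)^2 * (1 + 2 * rr p / n) \<le> measure_pmf.expectation (step p xs) (\<lambda>ys. (sum_list ys)^2)"
      using l by simp
  qed
  also have "\<dots> = g p (Suc n)" by (rule E_walk_step[OF n, symmetric])
  finally show ?thesis .
qed

lemma g_two: "g p 2 = 2"
proof -
  have g0: "measure_pmf.expectation (walk p 0) h = h []" for h :: "real list \<Rightarrow> real" by simp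
  have "g p 1 = 1"
    using E_walk_small[where n=0 and h="\<lambda>xs. (sum_list xs)^2" and p=p] by (simp add: g0)
  have "g p (Suc 1) = measure_pmf.expectation (walk p 1) (\<lambda>xs. (sum_list xs + 1)^2 / 2 + (sum_list xs - 1)^2 / 2)"
    using E_walk_small[where n=1 and h="\<lambda>xs. (sum_list xs)^2" and p=p] by simp
  also have "\<dots> = measure_pmf.expectation (walk p 1) (\<lambda>xs. (sum_list xs)^2 + 1)"
  proof -
    have pt: "\<And>s::real. (s+1)^2/2 + (s-1)^2/2 = s^2 + 1" by (simp add: power2_eq_square field_simps)
    show ?thesis by (simp only: pt)
  qed
  also have "\<dots> = g p 1 + 1"
  proof -
    have i1: "integrable (measure_pmf (walk p 1)) (\<lambda>xs. (sum_list xs)^2)" by (rule integrable_measure_pmf_finite[OF finite_walk])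
    have i2: "integrable (measure_pmf (walk p 1)) (\<lambda>xs. 1::real)" by (rule integrable_measure_pmf_finite[OF finite_walk])
    show ?thesis by (subst Bochner_Integration.integral_add[OF i1 i2]) simp
  qed
  finally show ?thesis using \<open>g p 1 = 1\<close> by (simp add: numeral_2_eq_2)
qed

lemma g_growth:
  assumes p: "7/8 < p" "p < 1" and n: "2 \<le> n"
  shows "(g p n)^2 \<ge> real n * (real n + 1) * (real n + 2) / 6"
  using n
proof (induction n rule: dec_induct)
  case base
  then show ?case by (simp add: g_two)
next
  case (step n)
  note P = params[OF p]
  have n2: "2 \<le> n" using step by simp
  have npos: "real n > 0" using n2 by simp
  have f: "1 + 2 * rr p / n \<ge> 1 + 3 / (2 * n)" using P npos by (simp add: field_simps)
  have f2: "(1 + 2 * rr p / n)^2 \<ge> 1 + 3 / n"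
  proof -
    have "(1 + 3 / (2 * n))^2 \<le> (1 + 2 * rr p / n)^2" by (rule power_mono[OF f]) (use npos in simp)
    moreover have "(1 + 3 / (2 * n))^2 \<ge> 1 + 3 / n" using npos by (simp add: power2_eq_square field_simps)
    ultimately show ?thesis by linarith
  qed
  have "g p n * (1 + 2 * rr p / n) \<ge> 0" using g_nonneg P npos by (simp add: add_pos_pos)
  then have "(g p (Suc n))^2 \<ge> (g p n * (1 + 2 * rr p / n))^2"
    using g_step[OF p n2] by (intro power_mono) auto
  also have "(g p n * (1 + 2 * rr p / n))^2 = (g p n)^2 * (1 + 2 * rr p / n)^2" by (simp add: power_mult_distrib)
  finally have A: "(g p (Suc n))^2 \<ge> (g p n)^2 * (1 + 2 * rr p / n)^2" .
  have B: "(g p n)^2 * (1 + 2 * rr p / n)^2 \<ge> real n * (real n + 1) * (real n + 2) / 6 * (1 + 3 / n)"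
    using step.IH f2 by (intro mult_mono) (auto simp: field_simps)
  have C: "real n * (real n + 1) * (real n + 2) / 6 * (1 + 3 / n) = real (Suc n) * (real (Suc n) + 1) * (real (Suc n) + 2) / 6"
    using npos by (simp add: field_simps)
  show ?case using A B C by linarith
qed

lemma Phi_bounds:
  assumes p: "7/8 < p" "p < 1" and len: "1 \<le> length xs" and xs: "set xs \<subseteq> {-1,0,1}"
  shows "Phi p xs \<le> (sum_list xs)^2 / (length xs)^2"
    "Phi p xs \<ge> exp (-1 / us p - cc p) * ((sum_list xs)^2 / (length xs)^2)"
proof -
  note P = params[OF p]
  define n where "n = real (length xs)"
  define m where "m = sum_list xs / n"
  define q where "q = nz xs / n"
  define A where "A = -(m^2)/us p - cc p*(q - qs p)^2"
  have npos: "n > 0" using len unfolding n_def by (cases xs) auto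
  have lb: "\<bar>sum_list xs\<bar> \<le> nz xs" "nz xs \<le> n" "0 \<le> nz xs" using list_bounds[OF xs] unfolding n_def by auto
  have q0: "0 \<le> q" "q \<le> 1" unfolding q_def using lb npos by auto
  have am: "\<bar>m\<bar> \<le> 1" unfolding m_def using lb npos by (simp add: abs_divide)
  have m2: "m^2 \<le> 1" using am by (metis abs_ge_zero abs_one power2_abs power_mono one_power2)
  have x2: "(q - qs p)^2 \<le> 1"
  proof -
    have "\<bar>q - qs p\<bar> \<le> 1" using q0 P by auto
    then show ?thesis by (metis abs_ge_zero abs_one power2_abs power_mono one_power2)
  qed
  have Phi0: "Phi p xs = m^2 * exp A" unfolding Phi_def A_def m_def q_def n_def by simp
  have mu: "m^2 = (sum_list xs)^2 / (length xs)^2" unfolding m_def n_def by (simp add: power_divide)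
  have Aneg: "A \<le> 0"
  proof -
    have "m^2/us p \<ge> 0" "cc p * (q - qs p)^2 \<ge> 0" using P by simp_all
    then show ?thesis unfolding A_def by linarith
  qed
  have Alow: "A \<ge> -1 / us p - cc p"
  proof -
    have "m^2/us p \<le> 1/us p" using m2 P by (simp add: divide_right_mono)
    moreover have "cc p * (q - qs p)^2 \<le> cc p" using x2 P by (simp add: mult_left_le)
    moreover have "-(m^2)/us p = -(m^2/us p)" by simp
    moreover have "-1/us p = -(1/us p)" by simp
    ultimately show ?thesis unfolding A_def by linarith
  qed
  show "Phi p xs \<le> (sum_list xs)^2 / (length xs)^2"
  proof -
    have "exp A \<le> 1" using Aneg by simp
    then have "m^2 * exp A \<le> m^2" using mult_left_le[of "exp A" "m^2"] by simp
    then show ?thesis unfolding Phi0 mu[symmetric] .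
  qed
  show "Phi p xs \<ge> exp (-1 / us p - cc p) * ((sum_list xs)^2 / (length xs)^2)"
  proof -
    have "exp (-1 / us p - cc p) \<le> exp A" using Alow by simp
    then have "exp (-1 / us p - cc p) * m^2 \<le> exp A * m^2" by (rule mult_right_mono) simp
    then show ?thesis unfolding Phi0 mu[symmetric] by (metis mult.commute)
  qed
qed

lemma e_bounds:
  assumes p: "7/8 < p" "p < 1" and n: "1 \<le> n"
  shows "measure_pmf.expectation (walk p n) (Phi p) \<le> g p n / (real n)^2"
    "measure_pmf.expectation (walk p n) (Phi p) \<ge> exp (-1 / us p - cc p) * (g p n / (real n)^2)"
proof -
  have "measure_pmf.expectation (walk p n) (Phi p) \<le> measure_pmf.expectation (walk p n) (\<lambda>xs. (sum_list xs)^2 / (real n)^2)"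
  proof (rule E_mono[OF finite_walk])
    fix xs assume "xs \<in> set_pmf (walk p n)"
    then have l: "length xs = n" and s: "set xs \<subseteq> {-1,0,1}" using walk_support by auto
    show "Phi p xs \<le> (sum_list xs)^2 / (real n)^2" using Phi_bounds(1)[OF p _ s] l n by simp
  qed
  then show "measure_pmf.expectation (walk p n) (Phi p) \<le> g p n / (real n)^2" by simp
  have "measure_pmf.expectation (walk p n) (Phi p) \<ge> measure_pmf.expectation (walk p n) (\<lambda>xs. exp (-1 / us p - cc p) * ((sum_list xs)^2 / (real n)^2))"
  proof (rule E_mono[OF finite_walk])
    fix xs assume "xs \<in> set_pmf (walk p n)"
    then have l: "length xs = n" and s: "set xs \<subseteq> {-1,0,1}" using walk_support by auto
    show "exp (-1 / us p - cc p) * ((sum_list xs)^2 / (real n)^2) \<le> Phi p xs" using Phi_bounds(2)[OF p _ s] l n by simp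
  qed
  then show "measure_pmf.expectation (walk p n) (Phi p) \<ge> exp (-1 / us p - cc p) * (g p n / (real n)^2)" by simp
qed

theorem main_lower:
  assumes p: "7/8 < p" "p < 1"
  shows "\<exists>\<delta> n0. \<delta> > 0 \<and> (\<forall>n\<ge>n0. g p n \<ge> \<delta> * (real n)^2)"
proof -
  note P = params[OF p]
  define a where "a = exp (-1 / us p - cc p)"
  define K where "K = KK p"
  have a: "a > 0" unfolding a_def by simp
  have K: "K > 0" unfolding K_def using P by simp
  define n0 where "n0 = max 2 (nat \<lceil>24*K^2/a^2\<rceil>)"
  have n02: "2 \<le> n0" unfolding n0_def by simp
  have n0big: "real n0 \<ge> 24*K^2/a^2" unfolding n0_def
    by (metis le_nat_iff max.cobounded2 of_nat_le_iff order_trans real_nat_ceiling_ge)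
  have n0pos: "real n0 > 0" using n02 by simp
  have gg: "(g p n0)^2 \<ge> real n0 * (real n0 + 1) * (real n0 + 2) / 6" by (rule g_growth[OF p n02])
  have "real n0 * (real n0 + 1) * (real n0 + 2) / 6 \<ge> real n0 * real n0 * real n0 / 6"
    using n0pos by (intro divide_right_mono mult_mono) auto
  moreover have "real n0 * real n0 * real n0 / 6 \<ge> (24*K^2/a^2) * real n0 * real n0 / 6"
    using n0big n0pos by (intro divide_right_mono mult_right_mono) auto
  moreover have "(24*K^2/a^2) * real n0 * real n0 / 6 = (2*K*real n0/a)^2"
    using a by (simp add: power2_eq_square field_simps)
  ultimately have "(2*K*real n0/a)^2 \<le> (g p n0)^2" using gg by linarith
  then have gn0: "2*K*real n0/a \<le> g p n0" using g_nonneg by (rule power2_le_imp_le)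
  have "measure_pmf.expectation (walk p n0) (Phi p) \<ge> a * (g p n0 / (real n0)^2)"
    using e_bounds(2)[OF p] n02 unfolding a_def by simp
  moreover have "a * (g p n0 / (real n0)^2) \<ge> a * ((2*K*real n0/a) / (real n0)^2)"
    using gn0 a n0pos by (intro mult_left_mono divide_right_mono) auto
  moreover have "a * ((2*K*real n0/a) / (real n0)^2) = 2*K/real n0"
    using a n0pos by (simp add: power2_eq_square field_simps)
  ultimately have en0: "measure_pmf.expectation (walk p n0) (Phi p) \<ge> 2*K/real n0" by linarith
  define \<delta> where "\<delta> = K / real n0"
  have dpos: "\<delta> > 0" unfolding \<delta>_def using K n0pos by simp
  have "\<forall>n\<ge>n0. g p n \<ge> \<delta> * (real n)^2"
  proof (intro allI impI)
    fix n assume n: "n0 \<le> n"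
    have npos: "real n > 0" using n n02 by simp
    have "measure_pmf.expectation (walk p n) (Phi p) \<ge> measure_pmf.expectation (walk p n0) (Phi p) - K / n0 + K / n"
      using Lyap_tele[OF p n02 n] unfolding K_def .
    moreover have "K / real n \<ge> 0" using K npos by simp
    moreover have "2*K/real n0 = 2*(K/real n0)" by simp
    ultimately have "measure_pmf.expectation (walk p n) (Phi p) \<ge> \<delta>" using en0 unfolding \<delta>_def by linarith
    moreover have "measure_pmf.expectation (walk p n) (Phi p) \<le> g p n / (real n)^2"
      using e_bounds(1)[OF p] n n02 by simp
    ultimately have "\<delta> \<le> g p n / (real n)^2" by linarith
    then show "g p n \<ge> \<delta> * (real n)^2" using npos by (simp add: field_simps)
  qed
  then show ?thesis using dpos by blast
qed

theorem corollary2p2: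
  fixes p :: real
  assumes "7/8 < p" and "p < 1"
  shows "\<exists>c C. 0 < c \<and> c \<le> C \<and>
           (\<forall>\<^sub>F n in sequentially. c * real n ^ 2 \<le> var_S p n \<and> var_S p n \<le> C * real n ^ 2)"
proof -
  have p01: "0 \<le> p" "p \<le> 1" using assms by auto
  obtain \<delta> n0 where d: "\<delta> > 0" and low: "\<forall>n\<ge>n0. g p n \<ge> \<delta> * (real n)^2"
    using main_lower[OF assms] by blast
  define c where "c = min \<delta> 1"
  have c: "0 < c" "c \<le> 1" unfolding c_def using d by auto
  have "\<forall>\<^sub>F n in sequentially. c * real n ^ 2 \<le> var_S p n \<and> var_S p n \<le> 1 * real n ^ 2"
  proof (rule eventually_sequentiallyI[of n0])
    fix n assume n: "n0 \<le> n"
    have v: "var_S p n = g p n" by (rule var_eq[OF p01])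
    have "c * real n ^ 2 \<le> \<delta> * real n ^ 2" unfolding c_def by (intro mult_right_mono) auto
    then show "c * real n ^ 2 \<le> var_S p n \<and> var_S p n \<le> 1 * real n ^ 2"
      using low n ES2_upper[of p n] unfolding v by auto
  qed
  then show ?thesis using c by blast
qed


end
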